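(* Let $A$ be an associative algebra, $M$ an $A$-bimodule, $H: A\otimes A\to M$ a Hochschild $2$-cocycle, and $\{ T_\alpha : M \to A \}_{\alpha \in \Omega}$ an $H$-twisted $\mathcal{O}$-operator family. Then the linear map $T : M \otimes \mathbf{k}\Omega \to A \otimes \mathbf{k}\Omega$, $T (u \otimes \alpha) = T_\alpha (u) \otimes \alpha$, is an $\widehat{H}$-twisted $\mathcal{O}$-operator on the $(A\otimes\mathbf{k}\Omega)$-bimodule $M \otimes \mathbf{k}\Omega$ over the algebra $A \otimes \mathbf{k}\Omega$, i.e. for all $X,Y\in M\otimes\mathbf{k}\Omega$, $$T(X)\bullet T(Y) = T\big(T(X)\bullet Y + X\bullet T(Y) + \widehat{H}(T(X),T(Y))\big).$$
   Context: $\Omega$ is a semigroup, $\mathbf{k}\Omega$ its semigroup algebra over a field $\mathbf{k}$ of characteristic $0$. A Hochschild $2$-cocycle is a bilinear $H: A^{\otimes 2}\to M$ with $a \cdot H (b, c) - H ( a \cdot b, c)+ H (a, b \cdot c) - H (a, b) \cdot c =0$. An $H$-twisted $\mathcal{O}$-operator family is a collection of linear maps $\{T_\alpha: M\to A\}_{\alpha\in\Omega}$ with $T_\alpha (u) \cdot T_\beta (v) = T_{\alpha \beta} \big( T_\alpha (u) \cdot v + u \cdot T_\beta (v) + H (T_\alpha (u), T_\beta (v)) \big)$ for all $u,v\in M$, $\alpha,\beta\in\Omega$. $A\otimes\mathbf{k}\Omega$ is the associative algebra with $(a\otimes\alpha)\bullet(b\otimes\beta)=a\cdot b\otimes\alpha\beta$;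 $M\otimes\mathbf{k}\Omega$ is an $(A\otimes\mathbf{k}\Omega)$-bimodule via $(a\otimes\alpha)\bullet(u\otimes\beta)=a\cdot u\otimes\alpha\beta$ and $(u\otimes\beta)\bullet(a\otimes\alpha)=u\cdot a\otimes\beta\alpha$. $\widehat{H}:(A\otimes\mathbf{k}\Omega)^{\otimes 2}\to M\otimes\mathbf{k}\Omega$ is the $2$-cocycle $\widehat{H}(a\otimes\alpha, b\otimes\beta)=H(a,b)\otimes\alpha\beta$. *)

theory Defs
  imports Complex_Main
begin

definition bilin :: "('k::field \<Rightarrow> 'a::ab_group_add \<Rightarrow> 'a) \<Rightarrow> ('k \<Rightarrow> 'b::ab_group_add \<Rightarrow> 'b)
    \<Rightarrow> ('k \<Rightarrow> 'c::ab_group_add \<Rightarrow> 'c) \<Rightarrow> ('a \<Rightarrow> 'b \<Rightarrow> 'c) \<Rightarrow> bool" where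
  "bilin s1 s2 s3 f \<longleftrightarrow>
     (\<forall>x. Vector_Spaces.linear s2 s3 (f x)) \<and> (\<forall>y. Vector_Spaces.linear s1 s3 (\<lambda>x. f x y))"

definition assoc_algebra :: "('k::field \<Rightarrow> 'a::ab_group_add \<Rightarrow> 'a) \<Rightarrow> ('a \<Rightarrow> 'a \<Rightarrow> 'a) \<Rightarrow> bool" where
  "assoc_algebra sA mA \<longleftrightarrow> bilin sA sA sA mA \<and> (\<forall>a b c. mA (mA a b) c = mA a (mA b c))"

definition bimodule :: "('k::field \<Rightarrow> 'a::ab_group_add \<Rightarrow> 'a) \<Rightarrow> ('a \<Rightarrow> 'a \<Rightarrow> 'a)
    \<Rightarrow> ('k \<Rightarrow> 'm::ab_group_add \<Rightarrow> 'm) \<Rightarrow> ('a \<Rightarrow> 'm \<Rightarrow> 'm) \<Rightarrow> ('m \<Rightarrow> 'a \<Rightarrow> 'm) \<Rightarrow> bool" where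
  "bimodule sA mA sM lact ract \<longleftrightarrow>
     bilin sA sM sM lact \<and> bilin sM sA sM ract \<and>
     (\<forall>a b u. lact (mA a b) u = lact a (lact b u)) \<and>
     (\<forall>a b u. ract u (mA a b) = ract (ract u a) b) \<and>
     (\<forall>a b u. ract (lact a u) b = lact a (ract u b))"

definition hochschild_2cocycle :: "('k::field \<Rightarrow> 'a::ab_group_add \<Rightarrow> 'a) \<Rightarrow> ('a \<Rightarrow> 'a \<Rightarrow> 'a)
    \<Rightarrow> ('k \<Rightarrow> 'm::ab_group_add \<Rightarrow> 'm) \<Rightarrow> ('a \<Rightarrow> 'm \<Rightarrow> 'm) \<Rightarrow> ('m \<Rightarrow> 'a \<Rightarrow> 'm)
    \<Rightarrow> ('a \<Rightarrow> 'a \<Rightarrow> 'm) \<Rightarrow> bool" where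
  "hochschild_2cocycle sA mA sM lact ract H \<longleftrightarrow>
     bilin sA sA sM H \<and>
     (\<forall>a b c. lact a (H b c) - H (mA a b) c + H a (mA b c) - ract (H a b) c = 0)"

definition twisted_O_family :: "('k::field \<Rightarrow> 'a::ab_group_add \<Rightarrow> 'a) \<Rightarrow> ('a \<Rightarrow> 'a \<Rightarrow> 'a)
    \<Rightarrow> ('k \<Rightarrow> 'm::ab_group_add \<Rightarrow> 'm) \<Rightarrow> ('a \<Rightarrow> 'm \<Rightarrow> 'm) \<Rightarrow> ('m \<Rightarrow> 'a \<Rightarrow> 'm)
    \<Rightarrow> ('a \<Rightarrow> 'a \<Rightarrow> 'm) \<Rightarrow> ('s::semigroup_mult \<Rightarrow> 'm \<Rightarrow> 'a) \<Rightarrow> bool" where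
  "twisted_O_family sA mA sM lact ract H T \<longleftrightarrow>
     (\<forall>\<alpha>. Vector_Spaces.linear sM sA (T \<alpha>)) \<and>
     (\<forall>\<alpha> \<beta> u v. mA (T \<alpha> u) (T \<beta> v) =
        T (\<alpha> * \<beta>) (lact (T \<alpha> u) v + ract u (T \<beta> v) + H (T \<alpha> u) (T \<beta> v)))"

text \<open>Elements of V (x) k\<Omega> are identified with finitely supported functions \<Omega> => V
  (sum over \<alpha> of v_\<alpha> (x) \<alpha>).\<close>
definition fin_supp :: "('s \<Rightarrow> 'v::zero) \<Rightarrow> bool" where
  "fin_supp f \<longleftrightarrow> finite {x. f x \<noteq> 0}"

text \<open>Convolution: for a bilinear p : V x W -> U, the induced map
  (v (x) \<alpha>, w (x) \<beta>) |-> p v w (x) \<alpha>\<beta> on finitely supported functions.\<close>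
definition conv :: "('v \<Rightarrow> 'w \<Rightarrow> 'u::comm_monoid_add) \<Rightarrow> ('s::semigroup_mult \<Rightarrow> 'v::zero)
    \<Rightarrow> ('s \<Rightarrow> 'w::zero) \<Rightarrow> 's \<Rightarrow> 'u" where
  "conv p f g \<gamma> = (\<Sum>(\<alpha>, \<beta>) \<in> {(\<alpha>, \<beta>). f \<alpha> \<noteq> 0 \<and> g \<beta> \<noteq> 0 \<and> \<alpha> * \<beta> = \<gamma>}. p (f \<alpha>) (g \<beta>))"

definition Tlift :: "('s \<Rightarrow> 'm \<Rightarrow> 'a) \<Rightarrow> ('s \<Rightarrow> 'm) \<Rightarrow> 's \<Rightarrow> 'a" where
  "Tlift T X = (\<lambda>\<alpha>. T \<alpha> (X \<alpha>))"

end

theory Submission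
  imports Defs
begin

lemma lin0: "Vector_Spaces.linear s1 s2 f \<Longrightarrow> f 0 = 0"
proof -
  assume "Vector_Spaces.linear s1 s2 f"
  hence "f (0 + 0) = f 0 + f 0" unfolding Vector_Spaces.linear_iff by blast
  thus ?thesis by simp
qed

lemma linadd: "Vector_Spaces.linear s1 s2 f \<Longrightarrow> f (x + y) = f x + f y"
  unfolding Vector_Spaces.linear_iff by blast

lemma linsum: "Vector_Spaces.linear s1 s2 f \<Longrightarrow> f (sum g S) = (\<Sum>x\<in>S. f (g x))"
proof -
  assume a: "Vector_Spaces.linear s1 s2 f"
  show ?thesis
    by (induction S rule: infinite_finite_induct) (auto simp: lin0[OF a] linadd[OF a])
qed

lemma conv_ext:
  fixes p :: "'v::zero \<Rightarrow> 'w::zero \<Rightarrow> 'u::comm_monoid_add" and f :: "'s::semigroup_mult \<Rightarrow> 'v"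
  assumes "\<And>y. p 0 y = 0" "\<And>x. p x 0 = 0" "finite A" "finite B"
    "\<And>\<alpha>. f \<alpha> \<noteq> 0 \<Longrightarrow> \<alpha> \<in> A" "\<And>\<beta>. g \<beta> \<noteq> 0 \<Longrightarrow> \<beta> \<in> B"
  shows "conv p f g \<gamma> = (\<Sum>(\<alpha>,\<beta>)\<in>{(\<alpha>,\<beta>). \<alpha> \<in> A \<and> \<beta> \<in> B \<and> \<alpha> * \<beta> = \<gamma>}. p (f \<alpha>) (g \<beta>))"
  unfolding conv_def
proof (rule sum.mono_neutral_left)
  have "{(\<alpha>,\<beta>). \<alpha> \<in> A \<and> \<beta> \<in> B \<and> \<alpha> * \<beta> = \<gamma>} \<subseteq> A \<times> B" by auto
  thus "finite {(\<alpha>,\<beta>). \<alpha> \<in> A \<and> \<beta> \<in> B \<and> \<alpha> * \<beta> = \<gamma>}"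
    using assms(3,4) finite_subset by blast
  show "{(\<alpha>, \<beta>). f \<alpha> \<noteq> 0 \<and> g \<beta> \<noteq> 0 \<and> \<alpha> * \<beta> = \<gamma>} \<subseteq> {(\<alpha>,\<beta>). \<alpha> \<in> A \<and> \<beta> \<in> B \<and> \<alpha> * \<beta> = \<gamma>}"
    using assms(5,6) by auto
  show "\<forall>i\<in>{(\<alpha>,\<beta>). \<alpha> \<in> A \<and> \<beta> \<in> B \<and> \<alpha> * \<beta> = \<gamma>} - {(\<alpha>, \<beta>). f \<alpha> \<noteq> 0 \<and> g \<beta> \<noteq> 0 \<and> \<alpha> * \<beta> = \<gamma>}.
     (case i of (\<alpha>, \<beta>) \<Rightarrow> p (f \<alpha>) (g \<beta>)) = 0"
    using assms(1,2) by auto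
qed

lemma Tlift_app: "Tlift T F x = T x (F x)" by (simp add: Tlift_def)

theorem proposition3p10:
  fixes sA :: "'k::field_char_0 \<Rightarrow> 'a::ab_group_add \<Rightarrow> 'a"
    and mA :: "'a \<Rightarrow> 'a \<Rightarrow> 'a"
    and sM :: "'k \<Rightarrow> 'm::ab_group_add \<Rightarrow> 'm"
    and lact :: "'a \<Rightarrow> 'm \<Rightarrow> 'm"
    and ract :: "'m \<Rightarrow> 'a \<Rightarrow> 'm"
    and H :: "'a \<Rightarrow> 'a \<Rightarrow> 'm"
    and T :: "'s::semigroup_mult \<Rightarrow> 'm \<Rightarrow> 'a"
    and X Y :: "'s \<Rightarrow> 'm"
  assumes "assoc_algebra sA mA"
    and "bimodule sA mA sM lact ract"
    and "hochschild_2cocycle sA mA sM lact ract H"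
    and "twisted_O_family sA mA sM lact ract H T"
    and "fin_supp X" and "fin_supp Y"
  shows "conv mA (Tlift T X) (Tlift T Y) =
         Tlift T (\<lambda>\<gamma>. conv lact (Tlift T X) Y \<gamma> + conv ract X (Tlift T Y) \<gamma>
                        + conv H (Tlift T X) (Tlift T Y) \<gamma>)"
proof
  fix \<gamma>
  define A where "A = {\<alpha>. X \<alpha> \<noteq> 0}"
  define B where "B = {\<alpha>. Y \<alpha> \<noteq> 0}"
  define S where "S = {(\<alpha>,\<beta>). \<alpha> \<in> A \<and> \<beta> \<in> B \<and> \<alpha> * \<beta> = \<gamma>}"
  have fA: "finite A" "finite B" using assms(5,6) unfolding A_def B_def fin_supp_def by auto
  have linT: "\<And>\<alpha>. Vector_Spaces.linear sM sA (T \<alpha>)"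
    and fam: "\<And>\<alpha> \<beta> u v. mA (T \<alpha> u) (T \<beta> v) =
        T (\<alpha> * \<beta>) (lact (T \<alpha> u) v + ract u (T \<beta> v) + H (T \<alpha> u) (T \<beta> v))"
    using assms(4) unfolding twisted_O_family_def by auto
  have T0: "\<And>\<alpha>. T \<alpha> 0 = 0" using linT lin0 by metis
  have sX: "\<And>\<alpha>. Tlift T X \<alpha> \<noteq> 0 \<Longrightarrow> \<alpha> \<in> A" "\<And>\<alpha>. X \<alpha> \<noteq> 0 \<Longrightarrow> \<alpha> \<in> A"
    using T0 by (auto simp: A_def Tlift_def)
  have sY: "\<And>\<alpha>. Tlift T Y \<alpha> \<noteq> 0 \<Longrightarrow> \<alpha> \<in> B" "\<And>\<alpha>. Y \<alpha> \<noteq> 0 \<Longrightarrow> \<alpha> \<in> B"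
    using T0 by (auto simp: B_def Tlift_def)
  have mb: "bilin sA sA sA mA" using assms(1) unfolding assoc_algebra_def by auto
  have lb: "bilin sA sM sM lact" and rb: "bilin sM sA sM ract"
    using assms(2) unfolding bimodule_def by auto
  have hb: "bilin sA sA sM H" using assms(3) unfolding hochschild_2cocycle_def by auto
  have m0: "\<And>y. mA 0 y = 0" "\<And>x. mA x 0 = 0" using mb unfolding bilin_def
    by (metis lin0)+
  have l0: "\<And>y. lact 0 y = 0" "\<And>x. lact x 0 = 0" using lb unfolding bilin_def
    by (metis lin0)+
  have r0: "\<And>y. ract 0 y = 0" "\<And>x. ract x 0 = 0" using rb unfolding bilin_def
    by (metis lin0)+
  have h0: "\<And>y. H 0 y = 0" "\<And>x. H x 0 = 0" using hb unfolding bilin_def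
    by (metis lin0)+
  have e1: "conv mA (Tlift T X) (Tlift T Y) \<gamma> = (\<Sum>(\<alpha>,\<beta>)\<in>S. mA (T \<alpha> (X \<alpha>)) (T \<beta> (Y \<beta>)))"
    using conv_ext[of mA A B "Tlift T X" "Tlift T Y", OF m0 fA sX(1) sY(1)] by (simp add: S_def Tlift_def)
  have e2: "conv lact (Tlift T X) Y \<gamma> = (\<Sum>(\<alpha>,\<beta>)\<in>S. lact (T \<alpha> (X \<alpha>)) (Y \<beta>))"
    using conv_ext[of lact A B "Tlift T X" Y, OF l0 fA sX(1) sY(2)] by (simp add: S_def Tlift_def)
  have e3: "conv ract X (Tlift T Y) \<gamma> = (\<Sum>(\<alpha>,\<beta>)\<in>S. ract (X \<alpha>) (T \<beta> (Y \<beta>)))"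
    using conv_ext[of ract A B X "Tlift T Y", OF r0 fA sX(2) sY(1)] by (simp add: S_def Tlift_def)
  have e4: "conv H (Tlift T X) (Tlift T Y) \<gamma> = (\<Sum>(\<alpha>,\<beta>)\<in>S. H (T \<alpha> (X \<alpha>)) (T \<beta> (Y \<beta>)))"
    using conv_ext[of H A B "Tlift T X" "Tlift T Y", OF h0 fA sX(1) sY(1)] by (simp add: S_def Tlift_def)
  have "Tlift T (\<lambda>\<gamma>. conv lact (Tlift T X) Y \<gamma> + conv ract X (Tlift T Y) \<gamma>
                        + conv H (Tlift T X) (Tlift T Y) \<gamma>) \<gamma>
     = T \<gamma> (\<Sum>(\<alpha>,\<beta>)\<in>S. lact (T \<alpha> (X \<alpha>)) (Y \<beta>) + ract (X \<alpha>) (T \<beta> (Y \<beta>)) + H (T \<alpha> (X \<alpha>)) (T \<beta> (Y \<beta>)))"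
    by (simp only: Tlift_app e2 e3 e4) (simp add: sum.distrib split_def)
  also have "\<dots> = (\<Sum>(\<alpha>,\<beta>)\<in>S. T \<gamma> (lact (T \<alpha> (X \<alpha>)) (Y \<beta>) + ract (X \<alpha>) (T \<beta> (Y \<beta>)) + H (T \<alpha> (X \<alpha>)) (T \<beta> (Y \<beta>))))"
    using linsum[OF linT] by (simp add: split_def)
  also have "\<dots> = (\<Sum>(\<alpha>,\<beta>)\<in>S. mA (T \<alpha> (X \<alpha>)) (T \<beta> (Y \<beta>)))"
    by (rule sum.cong) (auto simp: S_def fam)
  finally show "conv mA (Tlift T X) (Tlift T Y) \<gamma> = Tlift T (\<lambda>\<gamma>. conv lact (Tlift T X) Y \<gamma> + conv ract X (Tlift T Y) \<gamma>
                        + conv H (Tlift T X) (Tlift T Y) \<gamma>) \<gamma>" using e1 by simp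
qed

end
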